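(* Let $n\geq3$, let $S_n$ act on $V=\mathbb{C}^n$ by its natural permutation representation, and let $\alpha=\sum_{g\in S_n}\alpha_g$ be an element of $(H^{2,1}\oplus H^{2,0})^{S_n}$. If $g$ is neither the identity nor a $3$-cycle, then $\alpha_g=0$.
   Context: $S_n$ acts by $\sigma e_i=e_{\sigma(i)}$. For $g\in S_n$, let $V^g$ be its fixed space, $(V^g)^\perp$ its orthogonal complement with respect to the standard bilinear form, and $c_g=\operatorname{codim}V^g$. Identify $(V^g)^*$ with the functionals on $V$ vanishing on $(V^g)^\perp$, and $((V^g)^* )^\perp$ with the functionals on $V$ vanishing on $V^g$, so $V^*=(V^g)^*\oplus((V^g)^* )^\perp$. Define $H^{2,d}_g=S^d(V^g)\otimes\bigwedge^{2-c_g}(V^g)^*\otimes\bigwedge^{c_g}((V^g)^* )^\perp\otimes\mathbb{C}g$ (zero if $2-c_g<0$), viewed inside $S^d(V)\otimes\bigwedge^2V^*\otimes\mathbb{C}S_n$ (wedge the two exterior factors), and $H^{2,d}=\bigoplus_{g\in S_n}H^{2,d}_g$. $S_n$ acts diagonally: $h\cdot(f\otimes\omega\otimes g)=(h\cdot f)\otimes(h\cdot\omega)\otimes hgh^{-1}$, with the contragredient action on $V^*$; $(\cdot)^{S_n}$ denotes invariants and $\alpha_g$ the component of $\alpha$ in $H^{2,1}_g\oplus H^{2,0}_g$. *)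

theory Defs
  imports "HOL-Analysis.Analysis" "HOL-Combinatorics.Perm" "HOL-Library.Function_Algebras"
begin

text \<open>
  V = C^n with basis e_i indexed by a finite type 'n (n = CARD('n)).
  A vector v in V is its coordinate function 'n => complex; a functional
  phi in V^* is its coordinate function in the dual basis, phi(v) = sum_i phi_i v_i.
  S_n is the type 'n perm (all permutations of the finite type 'n).
  Action: sigma e_i = e_(sigma i), i.e. (sigma v)_(sigma i) = v_i; the
  contragredient action on V^* is given by the same coordinate formula.
\<close>

type_synonym 'n vec = "'n \<Rightarrow> complex"

definition cscale :: "complex \<Rightarrow> 'n vec \<Rightarrow> 'n vec" where
  "cscale c v = (\<lambda>i. c * v i)"

definition pact :: "'n perm \<Rightarrow> 'n vec \<Rightarrow> 'n vec" where
  "pact g v = (\<lambda>i. v (Perm.apply (inverse g) i))"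

definition pairing :: "'n::finite vec \<Rightarrow> 'n vec \<Rightarrow> complex" where
  "pairing u v = (\<Sum>i\<in>UNIV. u i * v i)"

definition fixsp :: "'n perm \<Rightarrow> 'n vec set" where
  "fixsp g = {v. pact g v = v}"

definition fixsp_perp :: "'n::finite perm \<Rightarrow> 'n vec set" where
  "fixsp_perp g = {w. \<forall>v\<in>fixsp g. pairing w v = 0}"

definition codim_fix :: "'n::finite perm \<Rightarrow> nat" where
  "codim_fix g = CARD('n) - vector_space.dim cscale (fixsp g)"

text \<open>(V^g)^* = functionals vanishing on (V^g)^perp; ((V^g)^*)^perp = functionals vanishing on V^g.\<close>
definition dual_fix :: "'n::finite perm \<Rightarrow> 'n vec set" where
  "dual_fix g = {phi. \<forall>w\<in>fixsp_perp g. pairing phi w = 0}"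

definition dual_fix_perp :: "'n::finite perm \<Rightarrow> 'n vec set" where
  "dual_fix_perp g = {phi. \<forall>v\<in>fixsp g. pairing phi v = 0}"

text \<open>2-forms on V: coefficient functions omega(j,k) = omega(e_j,e_k).
  Wedge of two 1-forms.\<close>
type_synonym 'n form2 = "'n \<Rightarrow> 'n \<Rightarrow> complex"

definition wedge :: "'n vec \<Rightarrow> 'n vec \<Rightarrow> 'n form2" where
  "wedge phi psi = (\<lambda>j k. phi j * psi k - phi k * psi j)"

text \<open>Tensors in S^1(V) (x) Lambda^2 V^*: coefficients a(i,j,k);
  tensors in S^0(V) (x) Lambda^2 V^* = Lambda^2 V^*: coefficients b(j,k).\<close>
type_synonym 'n tens1 = "'n \<Rightarrow> 'n \<Rightarrow> 'n \<Rightarrow> complex"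

definition scale1 :: "complex \<Rightarrow> 'n tens1 \<Rightarrow> 'n tens1" where
  "scale1 c a = (\<lambda>i j k. c * a i j k)"

definition scale0 :: "complex \<Rightarrow> 'n form2 \<Rightarrow> 'n form2" where
  "scale0 c b = (\<lambda>j k. c * b j k)"

text \<open>The set of 2-forms  omega1 /\ omega2  with omega1 in Lambda^(2-c)(V^g)^*,
  omega2 in Lambda^c((V^g)^*)^perp, written out for c = 0,1,2 (Lambda^0 = C,
  Lambda^1 U = U, Lambda^2 U spanned by u /\ u'); empty (space zero) for c > 2.
  H^{2,d}_g is the span of the products f (x) omega1 /\ omega2.\<close>
definition wedge_gens :: "'n::finite perm \<Rightarrow> 'n form2 set" where
  "wedge_gens g =
    (if codim_fix g = 0 then {wedge phi psi | phi psi. phi \<in> dual_fix g \<and> psi \<in> dual_fix g}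
     else if codim_fix g = 1 then {wedge phi psi | phi psi. phi \<in> dual_fix g \<and> psi \<in> dual_fix_perp g}
     else if codim_fix g = 2 then {wedge phi psi | phi psi. phi \<in> dual_fix_perp g \<and> psi \<in> dual_fix_perp g}
     else {})"

text \<open>H^{2,1}_g: span of f (x) omega with f in S^1(V^g) = V^g.\<close>
definition H21 :: "'n::finite perm \<Rightarrow> 'n tens1 set" where
  "H21 g = module.span scale1
     {(\<lambda>i j k. f i * w j k) | f w. f \<in> fixsp g \<and> w \<in> module.span scale0 (wedge_gens g)}"

text \<open>H^{2,0}_g: S^0(V^g) = C, so span of the forms omega.\<close>
definition H20 :: "'n::finite perm \<Rightarrow> 'n form2 set" where
  "H20 g = module.span scale0 (wedge_gens g)"

text \<open>Diagonal S_n action on S^d(V) (x) Lambda^2 V^* (x) C S_n, in coordinates: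
  an element is a function from the basis g of C S_n to tensor coefficients;
  h.(f (x) omega (x) g) = (h f) (x) (h omega) (x) h g h^-1.\<close>
definition act1 :: "'n perm \<Rightarrow> ('n perm \<Rightarrow> 'n tens1) \<Rightarrow> ('n perm \<Rightarrow> 'n tens1)" where
  "act1 h a = (\<lambda>g i j k. a (inverse h * g * h)
      (Perm.apply (inverse h) i) (Perm.apply (inverse h) j) (Perm.apply (inverse h) k))"

definition act0 :: "'n perm \<Rightarrow> ('n perm \<Rightarrow> 'n form2) \<Rightarrow> ('n perm \<Rightarrow> 'n form2)" where
  "act0 h b = (\<lambda>g j k. b (inverse h * g * h)
      (Perm.apply (inverse h) j) (Perm.apply (inverse h) k))"

definition is_3cycle :: "'n perm \<Rightarrow> bool" where
  "is_3cycle g \<longleftrightarrow> (\<exists>a b c. distinct [a, b, c] \<and> g = cycle [a, b, c])"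

end

theory Submission imports Defs begin

definition dlt :: "'n \<Rightarrow> 'n vec" where "dlt x = (\<lambda>i. if i = x then 1 else 0)"

lemma pairing_dlt[simp]: "pairing (dlt x) v = v x" "pairing v (dlt x) = v x"
proof -
  have "(\<Sum>i\<in>UNIV. (if i = x then 1 else 0) * v i) = (\<Sum>i\<in>UNIV. if i = x then v i else 0)"
    by (rule sum.cong) auto
  moreover have "(\<Sum>i\<in>UNIV. v i * (if i = x then 1 else 0)) = (\<Sum>i\<in>UNIV. if i = x then v i else 0)"
    by (rule sum.cong) auto
  ultimately show "pairing (dlt x) v = v x" "pairing v (dlt x) = v x"
    by (simp_all add: pairing_def dlt_def)
qed

interpretation cs: vector_space cscale
  by unfold_locales (auto simp: cscale_def fun_eq_iff algebra_simps)

interpretation s0: module scale0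
  by unfold_locales (auto simp: scale0_def fun_eq_iff algebra_simps)

interpretation s1: module scale1
  by unfold_locales (auto simp: scale1_def fun_eq_iff algebra_simps)

lemma sum_cscale_apply: "finite S \<Longrightarrow> (\<Sum>v\<in>S. cscale (u v) (f v)) i = (\<Sum>v\<in>S. u v * f v i)"
  by (induction S rule: finite_induct) (auto simp: cscale_def)

lemma span_dlt: "cs.span (range dlt) = (UNIV :: 'n::finite vec set)"
proof -
  { fix v :: "'n vec"
    have "v = (\<Sum>x\<in>UNIV. cscale (v x) (dlt x))"
    proof (rule ext)
      fix i show "v i = (\<Sum>x\<in>UNIV. cscale (v x) (dlt x)) i"
      proof -
        have "(\<Sum>x\<in>UNIV. cscale (v x) (dlt x)) i = (\<Sum>x\<in>UNIV. v x * dlt x i)"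
          by (rule sum_cscale_apply) simp
        also have "\<dots> = (\<Sum>x\<in>UNIV. if x = i then v x else 0)"
          by (rule sum.cong) (auto simp: dlt_def)
        finally show ?thesis by simp
      qed
    qed
    also have "\<dots> \<in> cs.span (range dlt)"
      by (intro cs.span_sum cs.span_scale cs.span_base) auto
    finally have "v \<in> cs.span (range dlt)" . }
  then show ?thesis by auto
qed

lemma dlt_inj: "inj dlt"
  unfolding inj_def dlt_def fun_eq_iff by (metis one_neq_zero)

lemma indep_dlt: "cs.independent (dlt ` (X::'n::finite set))"
proof -
  have "\<not> cs.dependent (dlt ` X)"
  proof
    assume "cs.dependent (dlt ` X)"
    then obtain u v where v: "v \<in> dlt ` X" "u v \<noteq> 0" and s: "(\<Sum>v\<in>dlt ` X. cscale (u v) v) = 0"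
      using cs.dependent_finite[of "dlt ` X"] by auto
    obtain x where x: "v = dlt x" "x \<in> X" using v by auto
    have "0 = (\<Sum>v\<in>dlt ` X. cscale (u v) v) x" using s by simp
    also have "\<dots> = (\<Sum>w\<in>dlt ` X. u w * w x)" by (simp add: sum_cscale_apply)
    also have "\<dots> = (\<Sum>w\<in>dlt ` X. if w = v then u w else 0)"
    proof (rule sum.cong)
      fix w assume "w \<in> dlt ` X"
      then obtain y where "w = dlt y" by auto
      then show "u w * w x = (if w = v then u w else 0)"
        using dlt_inj[unfolded inj_def] by (cases "y = x") (auto simp: x dlt_def)
    qed simp
    also have "\<dots> = u v" using v by simp
    finally show False using v by simp
  qed
  then show ?thesis by simp
qed

interpretation cf: finite_dimensional_vector_space cscale "range (dlt :: 'n::finite \<Rightarrow> _)"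
  by unfold_locales (auto simp: span_dlt indep_dlt)

lemma dim_univ: "cs.dim (UNIV :: 'n::finite vec set) = CARD('n)"
  using cf.dim_UNIV card_image[OF dlt_inj] by simp

lemma fixsp_iff: "v \<in> fixsp g \<longleftrightarrow> (\<forall>i. v (Perm.apply g i) = v i)"
proof
  assume "v \<in> fixsp g"
  then have h: "\<And>i. v (inv (Perm.apply g) i) = v i"
    by (auto simp: fixsp_def pact_def apply_inverse fun_eq_iff)
  show "\<forall>i. v (Perm.apply g i) = v i"
  proof
    fix i show "v (Perm.apply g i) = v i"
      using h[of "Perm.apply g i"] bij_apply[of g] by (simp add: bij_is_inj)
  qed
next
  assume h: "\<forall>i. v (Perm.apply g i) = v i"
  show "v \<in> fixsp g"
    unfolding fixsp_def pact_def apply_inverse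
  proof (simp, rule ext)
    fix i show "v (inv (Perm.apply g) i) = v i"
      using h[rule_format, of "inv (Perm.apply g) i"] bij_apply[of g]
      by (simp add: bij_is_surj surj_f_inv_f)
  qed
qed

lemma subspace_fixsp: "cs.subspace (fixsp g)"
  by (rule cs.subspaceI) (auto simp: fixsp_iff cscale_def)

lemma dim_bound:
  fixes W :: "'n::finite vec set"
  assumes W: "cs.subspace W" and H: "\<forall>v\<in>W. (\<forall>i. i \<notin> X \<longrightarrow> v i = 0) \<longrightarrow> v = 0"
  shows "cs.dim W + card X \<le> CARD('n)"
proof -
  define U where "U = {v :: 'n vec. \<forall>i. i \<notin> X \<longrightarrow> v i = 0}"
  have U: "cs.subspace U" unfolding U_def
    by (rule cs.subspaceI) (auto simp: cscale_def)
  have "card (dlt ` X) \<le> cs.dim U"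
    by (rule cf.independent_card_le_dim[OF _ indep_dlt]) (auto simp: U_def dlt_def)
  moreover have "card (dlt ` X) = card X"
    by (rule card_image[OF inj_on_subset[OF dlt_inj subset_UNIV]])
  moreover have "W \<inter> U \<subseteq> {0}" using H by (auto simp: U_def)
  then have "cs.dim (W \<inter> U) = 0" by simp
  moreover have "cs.dim {x + y |x y. x \<in> W \<and> y \<in> U} \<le> CARD('n)"
    using cf.dim_subset[of "{x + y |x y. x \<in> W \<and> y \<in> U}" UNIV] dim_univ[where 'n='n] by simp
  ultimately show ?thesis using cf.dim_sums_Int[OF W U] by linarith
qed

lemma codim_bound:
  fixes g :: "'n::finite perm"
  assumes "\<forall>v::'n vec. (\<forall>i. v (Perm.apply g i) = v i) \<longrightarrow> (\<forall>i. i \<notin> X \<longrightarrow> v i = 0) \<longrightarrow> v = 0"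
  shows "card X \<le> codim_fix g"
proof -
  have "\<forall>v\<in>fixsp g. (\<forall>i. i \<notin> X \<longrightarrow> v i = 0) \<longrightarrow> v = 0"
  proof (intro ballI impI)
    fix v assume "v \<in> fixsp g" "\<forall>i. i \<notin> X \<longrightarrow> v i = 0"
    then show "v = 0" using assms fixsp_iff[of v g] by blast
  qed
  from dim_bound[OF subspace_fixsp this] show ?thesis by (simp add: codim_fix_def)
qed

abbreviation ap :: "'a perm \<Rightarrow> 'a \<Rightarrow> 'a" where "ap \<equiv> Perm.apply"

lemma ap_inj[simp]: "ap g x = ap g y \<longleftrightarrow> x = y"
  by (rule apply_inj)

lemma ap_times[simp]: "ap (f * g) x = ap f (ap g x)"
  by (simp add: apply_times)

lemma codim_k:
  fixes g :: "'n::finite perm"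
  assumes "card X = k"
    and "\<And>v::'n vec. (\<forall>i. v (ap g i) = v i) \<Longrightarrow> (\<forall>i. i \<notin> X \<longrightarrow> v i = 0) \<Longrightarrow> (\<forall>x\<in>X. v x = 0)"
  shows "k \<le> codim_fix g"
proof -
  have "\<forall>v::'n vec. (\<forall>i. v (ap g i) = v i) \<longrightarrow> (\<forall>i. i \<notin> X \<longrightarrow> v i = 0) \<longrightarrow> v = 0"
  proof (intro allI impI)
    fix v :: "'n vec" assume h: "\<forall>i. v (ap g i) = v i" "\<forall>i. i \<notin> X \<longrightarrow> v i = 0"
    with assms(2)[OF h] show "v = 0" by (auto simp: fun_eq_iff)
  qed
  from codim_bound[OF this] assms(1) show ?thesis by simp
qed

lemma codim_ge1:
  fixes g :: "'n::finite perm"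
  assumes "g \<noteq> 1" shows "1 \<le> codim_fix g"
proof -
  obtain a where a: "ap g a \<noteq> a" using assms by (auto simp: perm_eq_iff)
  show ?thesis
  proof (rule codim_k[of "{a}"])
    fix v :: "'n vec" assume h: "\<forall>i. v (ap g i) = v i" "\<forall>i. i \<notin> {a} \<longrightarrow> v i = 0"
    then show "\<forall>x\<in>{a}. v x = 0" using a by (metis singletonD)
  qed simp
qed

lemma codim_double:
  fixes a b c d :: "'n::finite"
  assumes "distinct [a,b,c,d]" "g = Perm.swap a b * Perm.swap c d"
  shows "2 \<le> codim_fix g"
proof (rule codim_k[of "{a,c}"])
  show "card {a, c} = 2" using assms by auto
next
  fix v :: "'n vec" assume h: "\<forall>i. v (ap g i) = v i" "\<forall>i. i \<notin> {a,c} \<longrightarrow> v i = 0"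
  have "v a = v b" using h(1)[rule_format, of a] assms by simp
  moreover have "v c = v d" using h(1)[rule_format, of c] assms by auto
  ultimately show "\<forall>x\<in>{a, c}. v x = 0" using h(2) assms by auto
qed

lemma classify:
  fixes g :: "'n::finite perm"
  assumes g1: "g \<noteq> 1" and g3: "\<not> is_3cycle g"
  shows "(\<exists>a b. a \<noteq> b \<and> g = Perm.swap a b) \<or>
         (\<exists>a b c d. distinct [a,b,c,d] \<and> g = Perm.swap a b * Perm.swap c d) \<or> 3 \<le> codim_fix g"
proof -
  obtain a where a: "ap g a \<noteq> a" using g1 by (auto simp: perm_eq_iff)
  define b where "b = ap g a"
  have ba: "b \<noteq> a" using a b_def by simp
  show ?thesis
  proof (cases "ap g b = a")
    case False
    define c where "c = ap g b"
    have cb: "c \<noteq> b" unfolding c_def b_def using a by simp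
    have ca: "c \<noteq> a" using False c_def by simp
    define d where "d = ap g c"
    have dc: "d \<noteq> c" unfolding d_def c_def using cb c_def by simp
    have db: "d \<noteq> b" unfolding d_def b_def using ca by simp
    show ?thesis
    proof (cases "d = a")
      case False
      have "3 \<le> codim_fix g"
      proof (rule codim_k[of "{a,b,c}"])
        show "card {a, b, c} = 3" using ba cb ca by auto
      next
        fix v :: "'n vec" assume h: "\<forall>i. v (ap g i) = v i" "\<forall>i. i \<notin> {a,b,c} \<longrightarrow> v i = 0"
        have "v a = v b" "v b = v c" "v c = v d"
          using h(1) b_def c_def d_def by metis+
        moreover have "v d = 0" using h(2) False db dc by auto
        ultimately show "\<forall>x\<in>{a,b,c}. v x = 0" by auto
      qed
      then show ?thesis by simp
    next
      case True
      have "is_3cycle (cycle [a,b,c])" unfolding is_3cycle_def using ba cb ca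
        by (intro exI[of _ a] exI[of _ b] exI[of _ c]) auto
      then have "g \<noteq> cycle [a,b,c]" using g3 by auto
      then obtain e where e: "ap g e \<noteq> ap (cycle [a,b,c]) e" by (auto simp: perm_eq_iff)
      have ea: "e \<noteq> a" using e b_def ba ca cb by auto
      have eb: "e \<noteq> b" using e c_def ba cb ca by auto
      have ec: "e \<noteq> c" using e d_def True ca cb ba by auto
      have ge: "ap g e \<noteq> e" using e ea eb ec by simp
      define f where "f = ap g e"
      have fa: "f \<noteq> a" unfolding f_def using True d_def ec by auto
      have fb: "f \<noteq> b" unfolding f_def using b_def ea by auto
      have fc: "f \<noteq> c" unfolding f_def using c_def eb by auto
      have "3 \<le> codim_fix g"
      proof (rule codim_k[of "{a,b,e}"])
        show "card {a, b, e} = 3" using ba ea eb by auto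
      next
        fix v :: "'n vec" assume h: "\<forall>i. v (ap g i) = v i" "\<forall>i. i \<notin> {a,b,e} \<longrightarrow> v i = 0"
        have "v a = v b" "v b = v c" "v e = v f"
          using h(1) b_def c_def f_def by metis+
        moreover have "v c = 0" "v f = 0" using h(2) ca cb ec fa fb f_def ge by auto
        ultimately show "\<forall>x\<in>{a,b,e}. v x = 0" by auto
      qed
      then show ?thesis by simp
    qed
  next
    case gb: True
    show ?thesis
    proof (cases "g = Perm.swap a b")
      case True then show ?thesis using ba by (metis (no_types))
    next
      case False
      then obtain c where c: "ap g c \<noteq> ap (Perm.swap a b) c" by (auto simp: perm_eq_iff)
      have ca: "c \<noteq> a" using c b_def by auto
      have cb: "c \<noteq> b" using c gb by auto
      have gc: "ap g c \<noteq> c" using c ca cb by simp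
      define d where "d = ap g c"
      have da: "d \<noteq> a" unfolding d_def using gb cb by (metis ap_inj)
      have db: "d \<noteq> b" unfolding d_def using b_def ca by auto
      have dc: "d \<noteq> c" unfolding d_def using gc .
      show ?thesis
      proof (cases "ap g d = c")
        case False
        define e where "e = ap g d"
        have ea: "e \<noteq> a" unfolding e_def using gb db by (metis ap_inj)
        have eb: "e \<noteq> b" unfolding e_def using b_def da by auto
        have ec: "e \<noteq> c" unfolding e_def using False .
        have ed: "e \<noteq> d" unfolding e_def d_def using dc d_def by auto
        have "3 \<le> codim_fix g"
        proof (rule codim_k[of "{a,c,d}"])
          show "card {a, c, d} = 3" using ca da dc by auto
        next
          fix v :: "'n vec" assume h: "\<forall>i. v (ap g i) = v i" "\<forall>i. i \<notin> {a,c,d} \<longrightarrow> v i = 0"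
          have "v a = v b" "v c = v d" "v d = v e"
            using h(1) b_def d_def e_def by metis+
          moreover have "v b = 0" "v e = 0" using h(2) ba cb db ea ec ed by auto
          ultimately show "\<forall>x\<in>{a,c,d}. v x = 0" by auto
        qed
        then show ?thesis by simp
      next
        case gd: True
        show ?thesis
        proof (cases "g = Perm.swap a b * Perm.swap c d")
          case True
          have "distinct [a,b,c,d]" using ba ca cb da db dc by auto
          with True show ?thesis by blast
        next
          case False
          then obtain e where e: "ap g e \<noteq> ap (Perm.swap a b * Perm.swap c d) e"
            by (auto simp: perm_eq_iff)
          have ea: "e \<noteq> a" using e b_def ca da by auto
          have eb: "e \<noteq> b" using e gb cb db by auto
          have ec: "e \<noteq> c" using e d_def ca cb da db by auto
          have ed: "e \<noteq> d" using e gd ca cb da db by auto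
          have ge: "ap g e \<noteq> e" using e ea eb ec ed by simp
          define f where "f = ap g e"
          have fa: "f \<noteq> a" unfolding f_def using gb eb by (metis ap_inj)
          have fb: "f \<noteq> b" unfolding f_def using b_def ea by auto
          have fc: "f \<noteq> c" unfolding f_def using gd ed by (metis ap_inj)
          have fd: "f \<noteq> d" unfolding f_def using d_def ec by auto
          have "3 \<le> codim_fix g"
          proof (rule codim_k[of "{a,c,e}"])
            show "card {a, c, e} = 3" using ca ea ec by auto
          next
            fix v :: "'n vec" assume h: "\<forall>i. v (ap g i) = v i" "\<forall>i. i \<notin> {a,c,e} \<longrightarrow> v i = 0"
            have "v a = v b" "v c = v d" "v e = v f"
              using h(1) b_def d_def f_def by metis+
            moreover have "v b = 0" "v d = 0" "v f = 0"
              using h(2) ba cb eb da dc ed fa fc ge f_def by auto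
            ultimately show "\<forall>x\<in>{a,c,e}. v x = 0" by auto
          qed
          then show ?thesis by simp
        qed
      qed
    qed
  qed
qed

lemma kill:
  fixes a1 :: "'n::finite perm \<Rightarrow> 'n tens1"
    and a0 :: "'n perm \<Rightarrow> 'n form2"
    and g h :: "'n perm"
  assumes A1: "\<forall>x. a1 x \<in> H21 x"
    and A0: "\<forall>x. a0 x \<in> H20 x"
    and I1: "\<forall>h. act1 h a1 = a1"
    and I0: "\<forall>h. act0 h a0 = a0"
    and conj: "inverse h * g * h = g" and hinv: "inverse h = h"
    and fixf: "\<forall>f\<in>fixsp g. \<forall>i. f (ap h i) = f i"
    and wg: "\<forall>w\<in>wedge_gens g. \<forall>j k. w (ap h j) (ap h k) = - w j k"
  shows "a1 g = (\<lambda>i j k. 0) \<and> a0 g = (\<lambda>j k. 0)"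
proof -
  have conj': "h * g * h = g" using conj hinv by simp
  have S0: "s0.subspace {b. \<forall>j k. b (ap h j) (ap h k) = - b j k}"
    by (rule s0.subspaceI) (auto simp: scale0_def)
  have P0: "\<forall>j k. b (ap h j) (ap h k) = - b j k" if "b \<in> s0.span (wedge_gens g)" for b
    using s0.span_induct[OF that S0] wg by blast
  have S1: "s1.subspace {a. \<forall>i j k. a (ap h i) (ap h j) (ap h k) = - a i j k}"
    by (rule s1.subspaceI) (auto simp: scale1_def)
  have P1: "\<forall>i j k. a (ap h i) (ap h j) (ap h k) = - a i j k" if "a \<in> H21 g" for a
  proof -
    have "\<forall>i j k. x (ap h i) (ap h j) (ap h k) = - x i j k"
      if hx: "x \<in> {(\<lambda>i j k. f i * w j k) | f w. f \<in> fixsp g \<and> w \<in> s0.span (wedge_gens g)}" for x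
    proof -
      obtain f w where fw: "x = (\<lambda>i j k. f i * w j k)" "f \<in> fixsp g" "w \<in> s0.span (wedge_gens g)"
        using hx by blast
      show ?thesis using fixf fw(2) P0[OF fw(3)] by (simp add: fw(1))
    qed
    then show ?thesis using s1.span_induct[OF that[unfolded H21_def] S1] by blast
  qed
  have "a0 g j k = 0" for j k
  proof -
    have "a0 g j k = act0 h a0 g j k" using I0 by simp
    also have "\<dots> = a0 g (ap h j) (ap h k)" by (simp add: act0_def conj' hinv)
    also have "\<dots> = - a0 g j k" using P0 A0 by (simp add: H20_def)
    finally show ?thesis by simp
  qed
  moreover have "a1 g i j k = 0" for i j k
  proof -
    have "a1 g i j k = act1 h a1 g i j k" using I1 by simp
    also have "\<dots> = a1 g (ap h i) (ap h j) (ap h k)" by (simp add: act1_def conj' hinv)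
    also have "\<dots> = - a1 g i j k" using P1 A1 by simp
    finally show ?thesis by simp
  qed
  ultimately show ?thesis by (simp add: fun_eq_iff)
qed

lemma pairing_add2: "pairing u (\<lambda>x. v x + w x) = pairing u v + pairing u w"
  by (simp add: pairing_def distrib_left sum.distrib)

lemma pairing_diff1: "pairing (\<lambda>x. v x - w x) u = pairing v u - pairing w u"
  by (simp add: pairing_def left_diff_distrib sum_subtractf)

lemma dual_fix_inv:
  assumes "phi \<in> dual_fix g" shows "phi (ap g i) = phi i"
proof -
  define w where "w = (\<lambda>x. dlt (ap g i) x - dlt i x)"
  have "w \<in> fixsp_perp g"
    unfolding fixsp_perp_def
  proof (intro CollectI ballI)
    fix v assume "v \<in> fixsp g"
    then show "pairing w v = 0" unfolding w_def pairing_diff1 by (simp add: fixsp_iff)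
  qed
  then have "pairing phi w = 0" using assms by (simp add: dual_fix_def)
  then show ?thesis unfolding w_def pairing_def
    using pairing_dlt(2)[of phi] pairing_diff1 by (simp add: pairing_def right_diff_distrib sum_subtractf)
qed

definition ud :: "'n \<Rightarrow> 'n \<Rightarrow> 'n vec" where "ud a b = (\<lambda>x. dlt a x - dlt b x)"

lemma ud_swap1: "a \<noteq> b \<Longrightarrow> ud a b (ap (Perm.swap a b) x) = - ud a b x"
  by (cases "x = a"; cases "x = b") (auto simp: ud_def dlt_def)

lemma ud_swap2: "distinct [a,b,c,d] \<Longrightarrow> ud c d (ap (Perm.swap a b) x) = ud c d x"
  by (cases "x = a"; cases "x = b") (auto simp: ud_def dlt_def)

lemma perp_swap:
  assumes ab: "a \<noteq> b" and psi: "psi \<in> dual_fix_perp (Perm.swap a b)"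
  shows "psi = (\<lambda>x. psi a * ud a b x)"
proof -
  have z: "pairing psi v = 0" if "\<forall>x. v (ap (Perm.swap a b) x) = v x" for v
    using psi that by (simp add: dual_fix_perp_def fixsp_iff)
  have o: "psi i = 0" if "i \<noteq> a" "i \<noteq> b" for i
    using z[of "dlt i"] that
    by (metis (no_types, lifting) apply_swap_eq_iff apply_swap_same pairing_dlt(2) dlt_def)
  have "pairing psi (\<lambda>x. dlt a x + dlt b x) = 0"
    by (rule z) (auto simp: dlt_def)
  then have "psi a + psi b = 0" by (simp add: pairing_add2)
  then show ?thesis using o ab
    by (auto simp: fun_eq_iff ud_def dlt_def) (metis add_eq_0_iff)
qed

lemma ap_double:
  assumes dd: "distinct [a,b,c,d]"
  shows "ap (Perm.swap a b * Perm.swap c d) x =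
    (if x = a then b else if x = b then a else if x = c then d else if x = d then c else x)"
  using dd by (auto simp: apply_swap_same)

lemma perp_double:
  assumes dd: "distinct [a,b,c,d]" and psi: "psi \<in> dual_fix_perp (Perm.swap a b * Perm.swap c d)"
  shows "psi = (\<lambda>x. psi a * ud a b x + psi c * ud c d x)"
proof -
  have z: "pairing psi v = 0" if "\<forall>x. v (ap (Perm.swap a b * Perm.swap c d) x) = v x" for v
    using psi that by (simp add: dual_fix_perp_def fixsp_iff)
  have o: "psi i = 0" if "i \<notin> {a,b,c,d}" for i
  proof -
    have "\<forall>x. dlt i (ap (Perm.swap a b * Perm.swap c d) x) = dlt i x"
      unfolding ap_double[OF dd] using that by (auto simp: dlt_def)
    from z[OF this] show ?thesis by simp
  qed
  have "pairing psi (\<lambda>x. dlt a x + dlt b x) = 0"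
    by (rule z) (unfold ap_double[OF dd], insert dd, auto simp: dlt_def)
  then have p1: "psi a + psi b = 0" by (simp add: pairing_add2)
  have "pairing psi (\<lambda>x. dlt c x + dlt d x) = 0"
    by (rule z) (unfold ap_double[OF dd], insert dd, auto simp: dlt_def)
  then have p2: "psi c + psi d = 0" by (simp add: pairing_add2)
  have q1: "psi b = - psi a" using p1 by (simp add: eq_neg_iff_add_eq_0 add.commute)
  have q2: "psi d = - psi c" using p2 by (simp add: eq_neg_iff_add_eq_0 add.commute)
  show ?thesis
  proof (rule ext)
    fix x
    consider "x = a" | "x = b" | "x = c" | "x = d" | "x \<notin> {a,b,c,d}" by blast
    then show "psi x = psi a * ud a b x + psi c * ud c d x"
    proof cases
      case 5 then show ?thesis using o[OF 5] by (simp add: ud_def dlt_def)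
    qed (use dd q1 q2 in \<open>auto simp: ud_def dlt_def\<close>)
  qed
qed

theorem lemma4p3:
  fixes a1 :: "'n::finite perm \<Rightarrow> 'n tens1"
    and a0 :: "'n perm \<Rightarrow> 'n form2"
    and g :: "'n perm"
  assumes "CARD('n) \<ge> 3"
    and "\<forall>x. a1 x \<in> H21 x"
    and "\<forall>x. a0 x \<in> H20 x"
    and "\<forall>h. act1 h a1 = a1"
    and "\<forall>h. act0 h a0 = a0"
    and "g \<noteq> 1"
    and "\<not> is_3cycle g"
  shows "a1 g = (\<lambda>i j k. 0) \<and> a0 g = (\<lambda>j k. 0)"
proof -
  note K = kill[OF assms(2-5)]
  have c1: "1 \<le> codim_fix g" using codim_ge1[OF assms(6)] .
  from classify[OF assms(6,7)] show ?thesis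
  proof (elim disjE exE conjE)
    fix a b assume T: "a \<noteq> b" "g = Perm.swap a b"
    show ?thesis
    proof (rule K[of g g])
      show "inverse g * g * g = g" using T by (simp add: mult.assoc)
      show "inverse g = g" using T by simp
      show "\<forall>f\<in>fixsp g. \<forall>i. f (ap g i) = f i" by (simp add: fixsp_iff)
      show "\<forall>w\<in>wedge_gens g. \<forall>j k. w (ap g j) (ap g k) = - w j k"
      proof (intro ballI allI)
        fix w j k assume w: "w \<in> wedge_gens g"
        show "w (ap g j) (ap g k) = - w j k"
        proof (cases "codim_fix g = 1")
          case True
          with w obtain phi psi where pp: "w = wedge phi psi" "phi \<in> dual_fix g" "psi \<in> dual_fix_perp g"
            by (auto simp: wedge_gens_def)
          have ps0: "psi = (\<lambda>x. psi a * ud a b x)" by (rule perp_swap[OF T(1)]) (use pp(3) T(2) in simp)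
          define p where "p = psi a"
          have ps: "psi x = p * ud a b x" for x unfolding p_def using fun_cong[OF ps0, of x] by (simp only:)
          have "psi (ap g x) = - psi x" for x
            by (simp add: ps T ud_swap1)
          moreover have "phi (ap g x) = phi x" for x using dual_fix_inv[OF pp(2)] .
          ultimately show ?thesis by (simp add: pp(1) wedge_def)
        next
          case False
          show ?thesis
          proof (cases "codim_fix g = 2")
            case True
            with w c1 obtain phi psi where pp: "w = wedge phi psi" "phi \<in> dual_fix_perp g" "psi \<in> dual_fix_perp g"
              by (auto simp: wedge_gens_def)
            have ps0: "psi = (\<lambda>x. psi a * ud a b x)" by (rule perp_swap[OF T(1)]) (use pp(3) T(2) in simp)
            have ph0: "phi = (\<lambda>x. phi a * ud a b x)" by (rule perp_swap[OF T(1)]) (use pp(2) T(2) in simp)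
            define p where "p = psi a"
            define q where "q = phi a"
            have ps: "psi x = p * ud a b x" for x unfolding p_def using fun_cong[OF ps0, of x] by (simp only:)
            have ph: "phi x = q * ud a b x" for x unfolding q_def using fun_cong[OF ph0, of x] by (simp only:)
            show ?thesis unfolding pp(1) wedge_def
              by (simp add: ps ph T ud_swap1 algebra_simps)
          next
            case False
            with w c1 \<open>codim_fix g \<noteq> 1\<close> show ?thesis by (simp add: wedge_gens_def)
          qed
        qed
      qed
    qed
  next
    fix a b c d assume D: "distinct [a,b,c,d]" "g = Perm.swap a b * Perm.swap c d"
    let ?h = "Perm.swap a b"
    have dd: "a \<noteq> b" "a \<noteq> c" "a \<noteq> d" "b \<noteq> c" "b \<noteq> d" "c \<noteq> d" using D(1) by auto
    have c2: "2 \<le> codim_fix g" using codim_double[OF D] .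
    note K2 = K[of "Perm.swap a b" g]
    have X: "inverse ?h * g * ?h = g \<and> inverse ?h = ?h \<and> (\<forall>f\<in>fixsp g. \<forall>i. f (ap ?h i) = f i)
       \<and> (\<forall>w\<in>wedge_gens g. \<forall>j k. w (ap ?h j) (ap ?h k) = - w j k)"
    proof (intro conjI)
      have "Perm.swap c d * ?h = ?h * Perm.swap c d"
        by (rule perm_mult_commute) (use dd in \<open>auto simp: affected_swap\<close>)
      then show "inverse ?h * g * ?h = g" using D(2) by (simp add: mult.assoc[symmetric])
      show "inverse ?h = ?h" by simp
      show "\<forall>f\<in>fixsp g. \<forall>i. f (ap ?h i) = f i"
      proof (intro ballI allI)
        fix f i assume "f \<in> fixsp g"
        then have "f (ap g a) = f a" by (simp add: fixsp_iff)
        then have "f b = f a" using D(2) dd by (simp add: apply_swap_same)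
        then show "f (ap ?h i) = f i" by (cases "i = a"; cases "i = b") (auto simp: apply_swap_same)
      qed
      show "\<forall>w\<in>wedge_gens g. \<forall>j k. w (ap ?h j) (ap ?h k) = - w j k"
      proof (intro ballI allI)
        fix w j k assume w: "w \<in> wedge_gens g"
        show "w (ap ?h j) (ap ?h k) = - w j k"
        proof (cases "codim_fix g = 2")
          case True
          with w obtain phi psi where pp: "w = wedge phi psi" "phi \<in> dual_fix_perp g" "psi \<in> dual_fix_perp g"
            by (auto simp: wedge_gens_def)
          have ps0: "psi = (\<lambda>x. psi a * ud a b x + psi c * ud c d x)" by (rule perp_double[OF D(1)]) (use pp(3) D(2) in simp)
          have ph0: "phi = (\<lambda>x. phi a * ud a b x + phi c * ud c d x)" by (rule perp_double[OF D(1)]) (use pp(2) D(2) in simp)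
          define p1 where "p1 = psi a"
          define p2 where "p2 = psi c"
          define q1 where "q1 = phi a"
          define q2 where "q2 = phi c"
          have ps: "psi x = p1 * ud a b x + p2 * ud c d x" for x unfolding p1_def p2_def using fun_cong[OF ps0, of x] by (simp only:)
          have ph: "phi x = q1 * ud a b x + q2 * ud c d x" for x unfolding q1_def q2_def using fun_cong[OF ph0, of x] by (simp only:)
          have u1: "ud a b (ap ?h x) = - ud a b x" for x using ud_swap1[OF dd(1)] .
          have u2: "ud c d (ap ?h x) = ud c d x" for x using ud_swap2[OF D(1)] .
          show ?thesis unfolding pp(1) wedge_def
            by (simp add: ps ph u1 u2 algebra_simps)
        next
          case False
          with w c2 show ?thesis by (simp add: wedge_gens_def)
        qed
      qed
    qed
    then show ?thesis using K2 by blast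
  next
    assume C: "3 \<le> codim_fix g"
    show ?thesis
    proof (rule K[of 1 g])
      show "\<forall>w\<in>wedge_gens g. \<forall>j k. w (ap 1 j) (ap 1 k) = - w j k"
        using C by (simp add: wedge_gens_def)
    qed simp_all
  qed
qed

end
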